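(* For a polynomial $p(x,y)=\sum_{i,j\ge0}a_{i,j}x^iy^j$ and an integer $n\ge0$ define $I_n(p)=\sum_{i=0}^{n}\sum_{j=0}^{n-i}(-1)^j\binom{n-i}{j}a_{i,j}$. Then for all integers $n,k\ge 0$, $$I_n\big(((x-1)(y-1))^k\big)=1.$$ *)

theory Defs
  imports "HOL-Computational_Algebra.Polynomial"
begin

text \<open>Bivariate integer polynomials p(x,y) are represented as int poly poly:
  polynomials in y whose coefficients are polynomials in x.
  Thus a_{i,j} (coefficient of x^i y^j) is coeff (coeff p j) i.\<close>

definition bx :: "int poly poly" where
  "bx = [: [:0, 1:] :]"

definition bY :: "int poly poly" where
  "bY = [: 0, 1 :]"

definition acoef :: "int poly poly \<Rightarrow> nat \<Rightarrow> nat \<Rightarrow> int" where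
  "acoef p i j = coeff (coeff p j) i"

definition In :: "nat \<Rightarrow> int poly poly \<Rightarrow> int" where
  "In n p = (\<Sum>i = 0..n. \<Sum>j = 0..n - i. (-1) ^ j * int ((n - i) choose j) * acoef p i j)"

end

theory Submission
  imports Defs "HOL-Computational_Algebra.Formal_Power_Series"
begin

lemma coeff_lin_pow:
  fixes a b :: "'a :: comm_semiring_1"
  shows "coeff ([:a, b:] ^ n) i = of_nat (n choose i) * b ^ i * a ^ (n - i)"
proof (cases "i \<le> n")
  case True then show ?thesis by (rule coeff_linear_poly_power)
next
  case False
  have "degree ([:a, b:] ^ n) \<le> n"
    by (rule order.trans[OF degree_power_le]) (simp add: degree_pCons_le)
  then have "coeff ([:a, b:] ^ n) i = 0" using False by (intro coeff_eq_0) simp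
  then show ?thesis using False by (simp add: binomial_eq_0 not_le)
qed

lemma smult_pow: "(smult c q) ^ k = smult (c ^ k) (q ^ k)"
  by (induct k) (simp_all add: mult_ac)

lemma acoef_formula:
  "acoef (((bx - 1) * (bY - 1)) ^ k) i j =
     (int (k choose i) * (-1)^(k-i)) * (int (k choose j) * (-1)^(k-j))"
proof -
  have e: "(bx - 1) * (bY - 1) = smult [:-1,1:] [:-1, 1:]"
    unfolding bx_def bY_def by (simp add: one_pCons)
  have "((bx - 1) * (bY - 1)) ^ k = smult ([:-1,1:]^k) ([:-1, 1:]^k)"
    unfolding e by (rule smult_pow)
  moreover have m1: "(-1::int poly)^m = [:(-1)^m:]" for m
    by (induct m) simp_all
  moreover have "coeff ([:-1,1:]^k :: int poly poly) j = [: int (k choose j) * (-1)^(k-j) :]"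
    by (simp add: coeff_lin_pow of_nat_poly m1)
  moreover have "coeff ([:-1,1:]^k :: int poly) i = int (k choose i) * (-1)^(k-i)"
    by (simp add: coeff_lin_pow)
  ultimately show ?thesis
    unfolding acoef_def by (simp add: mult_ac)
qed

lemma inner:
  "(\<Sum>j = 0..m. (-1) ^ j * int (m choose j) * (int (k choose j) * (-1)^(k-j)))
     = (-1)^k * int ((k + m) choose m)"
proof -
  have "(\<Sum>j = 0..m. (-1) ^ j * int (m choose j) * (int (k choose j) * (-1)^(k-j)))
     = (\<Sum>j = 0..m. (-1)^k * int ((k choose j) * (m choose (m - j))))"
  proof (rule sum.cong[OF refl])
    fix j assume "j \<in> {0..m}"
    then have jm: "j \<le> m" by simp
    show "(-1) ^ j * int (m choose j) * (int (k choose j) * (-1)^(k-j)) =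
          (-1)^k * int ((k choose j) * (m choose (m - j)))"
    proof (cases "j \<le> k")
      case True
      then have "(-1::int)^j * (-1)^(k-j) = (-1)^k" by (simp flip: power_add)
      moreover have "m choose (m - j) = m choose j" using jm by (simp add: binomial_symmetric[symmetric])
      ultimately show ?thesis
        by (simp only: of_nat_mult) (simp add: mult_ac)
    next
      case False then show ?thesis by simp
    qed
  qed
  also have "\<dots> = (-1)^k * int (\<Sum>j\<le>m. (k choose j) * (m choose (m - j)))"
    by (simp add: sum_distrib_left atLeast0AtMost)
  also have "(\<Sum>j\<le>m. (k choose j) * (m choose (m - j))) = (k + m) choose m"
    by (rule vandermonde)
  finally show ?thesis .
qed

lemma outer_rat:
  "(\<Sum>i = 0..n. (-1)^i * of_nat (k choose i) * of_nat ((k + (n - i)) choose (n - i)) :: rat) = 1"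
proof -
  have "(\<Sum>i = 0..n. (-1)^i * of_nat (k choose i) * of_nat ((k + (n - i)) choose (n - i)) :: rat)
     = (\<Sum>i = 0..n. (-1)^n * ((of_nat k gchoose i) * ((- of_nat k - 1) gchoose (n - i))))"
  proof (rule sum.cong[OF refl])
    fix i assume "i \<in> {0..n}"
    then have i: "i \<le> n" by simp
    have a: "(of_nat ((k + (n - i)) choose (n - i)) :: rat)
        = (-1)^(n-i) * ((- of_nat k - 1) gchoose (n - i))"
      by (subst binomial_gbinomial, subst gbinomial_negated_upper) (simp add: algebra_simps)
    have b: "(-1::rat)^i * (-1)^(n-i) = (-1)^n" using i by (simp flip: power_add)
    show "(-1)^i * of_nat (k choose i) * of_nat ((k + (n - i)) choose (n - i)) =
        (-1)^n * ((of_nat k gchoose i) * ((- of_nat k - 1) gchoose (n - i)) :: rat)"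
      by (simp only: a) (simp only: binomial_gbinomial b[symmetric] mult_ac)
  qed
  also have "\<dots> = (-1)^n * (\<Sum>i = 0..n. (of_nat k gchoose i) * ((- of_nat k - 1) gchoose (n - i)))"
    by (simp add: sum_distrib_left)
  also have "(\<Sum>i = 0..n. (of_nat k gchoose i) * ((- of_nat k - 1) gchoose (n - i))) = ((-1::rat) gchoose n)"
    by (subst gbinomial_Vandermonde) simp
  also have "((-1::rat) gchoose n) = (-1)^n"
    using gbinomial_minus[of "1::rat" n] binomial_gbinomial[of n n, where 'a=rat] by simp
  finally show ?thesis by (simp flip: power_add)
qed

lemma outer:
  "(\<Sum>i = 0..n. (-1)^i * int (k choose i) * int ((k + (n - i)) choose (n - i))) = 1"
proof -
  have "of_int (\<Sum>i = 0..n. (-1)^i * int (k choose i) * int ((k + (n - i)) choose (n - i))) = (1::rat)"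
    unfolding of_int_sum of_int_mult of_int_power of_int_of_nat_eq of_int_minus of_int_1
    by (rule outer_rat)
  then show ?thesis by (metis of_int_eq_1_iff)
qed

theorem lemma3p3:
  fixes n k :: nat
  shows "In n (((bx - 1) * (bY - 1)) ^ k) = 1"
proof -
  have "In n (((bx - 1) * (bY - 1)) ^ k) =
     (\<Sum>i = 0..n. (int (k choose i) * (-1)^(k-i)) *
        (\<Sum>j = 0..n - i. (-1) ^ j * int ((n - i) choose j) * (int (k choose j) * (-1)^(k-j))))"
    unfolding In_def acoef_formula
    by (simp add: sum_distrib_left mult_ac)
  also have "\<dots> = (\<Sum>i = 0..n. (-1)^i * int (k choose i) * int ((k + (n - i)) choose (n - i)))"
  proof (rule sum.cong[OF refl])
    fix i assume "i \<in> {0..n}"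
    show "(int (k choose i) * (-1)^(k-i)) *
        (\<Sum>j = 0..n - i. (-1) ^ j * int ((n - i) choose j) * (int (k choose j) * (-1)^(k-j)))
        = (-1)^i * int (k choose i) * int ((k + (n - i)) choose (n - i))"
    proof (cases "i \<le> k")
      case True
      then have kk: "(-1::int)^k = (-1)^i * (-1)^(k-i)"
        by (simp flip: power_add)
      have "(-1::int)^(k-i) * (-1)^k = (-1)^i"
        unfolding kk by (simp add: minus_one_power_iff)
      then show ?thesis unfolding inner
        by (simp only: mult_ac) (simp only: mult.assoc[symmetric])
    next
      case False then show ?thesis by simp
    qed
  qed
  also have "\<dots> = 1" by (rule outer)
  finally show ?thesis .
qed

end
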